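(* Let $n\ge 2$ and let $\rho$ be an $n$-qubit state. Then $L(\rho)=1$ if and only if there exists $j\in[n]$ such that $\mathrm{rank}\,\rho_{\{i\}}=1$ for all $i\in[n]\setminus\{j\}$ (i.e. at most one single-qubit marginal of $\rho$ is not pure).
   Context: Let $[n]=\{1,\dots,n\}$, $\mathcal H_{[n]}=(\mathbb C^2)^{\otimes n}$; for $S\subseteq[n]$, $\rho_S$ is the partial trace over qubits outside $S$. $\mathcal C(\rho,\mathcal S)=\{\sigma\text{ density matrix on }\mathcal H_{[n]}:\sigma_S=\rho_S\ \forall S\in\mathcal S\}$; a collection $\mathcal S$ of subsets of $[n]$ determines $\rho$ if $\mathcal C(\rho,\mathcal S)=\{\rho\}$. $L(\rho)=\min_{\mathcal S\text{ determines }\rho}\max_{S\in\mathcal S}|S|$. *)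

theory Defs
  imports Complex_Main "Jordan_Normal_Form.DL_Rank"
begin

(* Computational basis of the qubits in a set T of qubit labels:
   a basis state is a bit assignment x :: nat => bool with x k = False
   for every k outside T (qubit k is in state |1> iff x k). *)
definition cfgs :: "nat set \<Rightarrow> (nat \<Rightarrow> bool) set" where
  "cfgs T = {x. \<forall>k. x k \<longrightarrow> k \<in> T}"

(* An operator on H_T is a function of (row basis state, column basis state);
   an n-qubit operator is one on H_[n], [n] = {1..n}, and we require it to vanish
   outside the basis of H_[n] so that equality of operators is equality of functions. *)
type_synonym op = "(nat \<Rightarrow> bool) \<Rightarrow> (nat \<Rightarrow> bool) \<Rightarrow> complex"

definition qubits :: "nat \<Rightarrow> nat set" where
  "qubits n = {1..n}"

definition density_matrix :: "nat \<Rightarrow> op \<Rightarrow> bool" where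
  "density_matrix n \<rho> \<longleftrightarrow>
     (\<forall>x y. x \<notin> cfgs (qubits n) \<or> y \<notin> cfgs (qubits n) \<longrightarrow> \<rho> x y = 0) \<and>
     (\<forall>v :: (nat \<Rightarrow> bool) \<Rightarrow> complex.
        (let q = (\<Sum>x\<in>cfgs (qubits n). \<Sum>y\<in>cfgs (qubits n). cnj (v x) * \<rho> x y * v y)
         in Im q = 0 \<and> Re q \<ge> 0)) \<and>
     (\<Sum>x\<in>cfgs (qubits n). \<rho> x x) = 1"

definition marginal :: "nat \<Rightarrow> op \<Rightarrow> nat set \<Rightarrow> op" where
  "marginal n \<rho> S = (\<lambda>x y.
     if x \<in> cfgs S \<and> y \<in> cfgs S
     then (\<Sum>z\<in>cfgs (qubits n - S). \<rho> (\<lambda>k. x k \<or> z k) (\<lambda>k. y k \<or> z k))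
     else 0)"

definition compatible :: "nat \<Rightarrow> op \<Rightarrow> nat set set \<Rightarrow> op set" where
  "compatible n \<rho> SS = {\<sigma>. density_matrix n \<sigma> \<and> (\<forall>S\<in>SS. marginal n \<sigma> S = marginal n \<rho> S)}"

definition determines :: "nat \<Rightarrow> nat set set \<Rightarrow> op \<Rightarrow> bool" where
  "determines n SS \<rho> \<longleftrightarrow> (\<forall>S\<in>SS. S \<subseteq> qubits n) \<and> compatible n \<rho> SS = {\<rho>}"

definition L :: "nat \<Rightarrow> op \<Rightarrow> nat" where
  "L n \<rho> = (LEAST k. \<exists>SS. determines n SS \<rho> \<and> (\<forall>S\<in>SS. card S \<le> k))"

definition qubit_basis :: "nat \<Rightarrow> nat \<Rightarrow> (nat \<Rightarrow> bool)" where
  "qubit_basis i a = (\<lambda>k. k = i \<and> a = 1)"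

definition single_marginal :: "nat \<Rightarrow> op \<Rightarrow> nat \<Rightarrow> complex mat" where
  "single_marginal n \<rho> i =
     mat 2 2 (\<lambda>(a, b). marginal n \<rho> {i} (qubit_basis i a) (qubit_basis i b))"

end

theory Submission
  imports Defs "Jordan_Normal_Form.DL_Rank_Submatrix"
begin

lemma finite_cfgs: "finite T \<Longrightarrow> finite (cfgs T)"
proof -
  assume "finite T"
  have "cfgs T \<subseteq> (\<lambda>S k. k \<in> S) ` Pow T"
  proof
    fix x assume "x \<in> cfgs T"
    then have "x = (\<lambda>k. k \<in> {k. x k})" "{k. x k} \<in> Pow T" by (auto simp: cfgs_def)
    then show "x \<in> (\<lambda>S k. k \<in> S) ` Pow T" by blast
  qed
  then show ?thesis using \<open>finite T\<close> finite_subset by blast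
qed

lemma cfgs_upd: "z \<in> cfgs (T - {k}) \<Longrightarrow> k \<in> T \<Longrightarrow> z(k := b) \<in> cfgs T"
  by (auto simp: cfgs_def)

lemma cfgs_clear: "x \<in> cfgs T \<Longrightarrow> x(k := False) \<in> cfgs (T - {k})"
  by (auto simp: cfgs_def)

lemma cfgs_notk: "z \<in> cfgs (T - {k}) \<Longrightarrow> z k = False"
  by (auto simp: cfgs_def)

lemma sum_split:
  assumes "k \<in> T"
  shows "(\<Sum>x\<in>cfgs T. f x) = (\<Sum>z\<in>cfgs (T - {k}). f (z(k := False)) + f (z(k := True)))"
proof -
  have "(\<Sum>x\<in>cfgs T. f x) = (\<Sum>p\<in>cfgs (T - {k}) \<times> (UNIV::bool set). f ((fst p)(k := snd p)))"
  proof (rule sum.reindex_bij_witness[where i = "\<lambda>p. (fst p)(k := snd p)" and j = "\<lambda>x. (x(k:=False), x k)"])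
    fix p assume "p \<in> cfgs (T - {k}) \<times> (UNIV::bool set)"
    then show "(((fst p)(k := snd p))(k := False), ((fst p)(k := snd p)) k) = p"
      by (cases p) (auto simp: cfgs_def fun_eq_iff)
  next
    fix p assume "p \<in> cfgs (T - {k}) \<times> (UNIV::bool set)"
    then show "(fst p)(k := snd p) \<in> cfgs T" using assms by (cases p) (auto simp: cfgs_def)
  qed (use assms in \<open>auto simp: cfgs_def\<close>)
  also have "\<dots> = (\<Sum>z\<in>cfgs (T - {k}). \<Sum>b\<in>(UNIV::bool set). f (z(k := b)))"
    by (simp add: sum.cartesian_product split_def)
  also have "\<dots> = (\<Sum>z\<in>cfgs (T - {k}). f (z(k := False)) + f (z(k := True)))"
    by (simp add: UNIV_bool add.commute)
  finally show ?thesis .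
qed

definition Bf :: "nat set \<Rightarrow> op \<Rightarrow> ((nat \<Rightarrow> bool) \<Rightarrow> complex) \<Rightarrow> ((nat \<Rightarrow> bool) \<Rightarrow> complex) \<Rightarrow> complex" where
  "Bf T \<sigma> v w = (\<Sum>x\<in>cfgs T. \<Sum>y\<in>cfgs T. cnj (v x) * \<sigma> x y * w y)"

definition psd :: "nat set \<Rightarrow> op \<Rightarrow> bool" where
  "psd T \<sigma> \<longleftrightarrow> (\<forall>x y. x \<notin> cfgs T \<or> y \<notin> cfgs T \<longrightarrow> \<sigma> x y = 0) \<and>
     (\<forall>v. Im (Bf T \<sigma> v v) = 0 \<and> Re (Bf T \<sigma> v v) \<ge> 0)"

definition tr :: "nat set \<Rightarrow> op \<Rightarrow> complex" where
  "tr T \<sigma> = (\<Sum>x\<in>cfgs T. \<sigma> x x)"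

lemma density_iff: "density_matrix n \<rho> \<longleftrightarrow> psd (qubits n) \<rho> \<and> tr (qubits n) \<rho> = 1"
  by (simp add: density_matrix_def psd_def Bf_def tr_def Let_def)

lemma psd_zero: "psd T \<sigma> \<Longrightarrow> x \<notin> cfgs T \<or> y \<notin> cfgs T \<Longrightarrow> \<sigma> x y = 0"
  unfolding psd_def by blast

lemma real_key: assumes "\<And>s::real. s * c + s^2 * e \<ge> 0" shows "c = 0"
proof (rule ccontr)
  assume "c \<noteq> 0"
  define a where "a = \<bar>e\<bar> + 1"
  have p: "a > 0" "\<bar>e\<bar> = a - 1" by (auto simp: a_def)
  define s where "s = - c / a"
  have "s * c + s^2 * e \<le> s * c + s^2 * \<bar>e\<bar>" by (simp add: mult_left_mono)
  also have "\<dots> = - (c^2) / a + c^2 * (a - 1) / a^2"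
    unfolding p(2) using p(1) by (simp add: s_def power2_eq_square field_simps)
  also have "\<dots> = - (c^2) / a^2"
    using p by (simp add: power2_eq_square field_simps)
  also have "\<dots> < 0" using \<open>c \<noteq> 0\<close> p by (simp add: divide_pos_pos)
  finally show False using assms[of s] by linarith
qed

lemma cplx_key:
  assumes h: "\<And>t::complex. Im (cnj t * A + t * B + cnj t * t * d) = 0 \<and> Re (cnj t * A + t * B + cnj t * t * d) \<ge> 0"
    and d: "Im d = 0"
  shows "A = 0 \<and> B = 0"
proof -
  have r: "\<And>s::real. s * Re (A + B) + s^2 * Re d \<ge> 0"
  proof -
    fix s :: real
    have "Re (cnj (of_real s) * A + of_real s * B + cnj (of_real s) * of_real s * d) \<ge> 0" using h by blast
    then show "s * Re (A + B) + s^2 * Re d \<ge> 0" by (simp add: power2_eq_square algebra_simps)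
  qed
  have i1: "Im (A + B) = 0"
  proof -
    have "Im (cnj 1 * A + 1 * B + cnj 1 * 1 * d) = 0" using h by blast
    then show ?thesis using d by simp
  qed
  have r2: "\<And>s::real. s * (- Im (B - A)) + s^2 * Re d \<ge> 0"
  proof -
    fix s :: real
    have "Re (cnj (\<i> * of_real s) * A + (\<i> * of_real s) * B + cnj (\<i> * of_real s) * (\<i> * of_real s) * d) \<ge> 0" using h by blast
    then show "s * (- Im (B - A)) + s^2 * Re d \<ge> 0" by (simp add: power2_eq_square algebra_simps)
  qed
  have i2: "Re (B - A) = 0"
  proof -
    have "Im (cnj \<i> * A + \<i> * B + cnj \<i> * \<i> * d) = 0" using h by blast
    then show ?thesis using d by (simp add: algebra_simps)
  qed
  have "Re (A + B) = 0" using real_key[OF r] .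
  moreover have "Im (B - A) = 0" using real_key[OF r2] by simp
  ultimately show ?thesis using i1 i2 by (simp add: complex_eq_iff)
qed

lemma Bf_expand:
  "Bf T \<sigma> (\<lambda>x. v x + t * w x) (\<lambda>x. v x + t * w x) =
    Bf T \<sigma> v v + cnj t * Bf T \<sigma> w v + t * Bf T \<sigma> v w + cnj t * t * Bf T \<sigma> w w"
proof -
  have e: "cnj (v x + t * w x) * \<sigma> x y * (v y + t * w y) = cnj (v x) * \<sigma> x y * v y + cnj t * (cnj (w x) * \<sigma> x y * v y)
     + t * (cnj (v x) * \<sigma> x y * w y) + cnj t * t * (cnj (w x) * \<sigma> x y * w y)" for x y
    by (simp add: algebra_simps)
  show ?thesis unfolding Bf_def e by (simp only: sum.distrib sum_distrib_left)
qed

lemma Bf_left: "Bf T \<sigma> w v = (\<Sum>x\<in>cfgs T. cnj (w x) * (\<Sum>y\<in>cfgs T. \<sigma> x y * v y))"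
  unfolding Bf_def by (simp add: sum_distrib_left mult.assoc)

lemma Bf_right: "Bf T \<sigma> v w = (\<Sum>y\<in>cfgs T. (\<Sum>x\<in>cfgs T. cnj (v x) * \<sigma> x y) * w y)"
  unfolding Bf_def sum_distrib_right by (rule sum.swap)

lemma sum_ind: "finite S \<Longrightarrow> x0 \<in> S \<Longrightarrow> (\<Sum>x\<in>S. cnj (if x = x0 then 1 else 0) * g x) = (g x0 :: complex)"
proof -
  assume "finite S" "x0 \<in> S"
  have "(\<Sum>x\<in>S. cnj (if x = x0 then 1 else 0) * g x) = (\<Sum>x\<in>S. if x = x0 then g x else 0)"
    by (rule sum.cong) auto
  then show ?thesis using \<open>finite S\<close> \<open>x0 \<in> S\<close> by simp
qed

lemma sum_ind2: "finite S \<Longrightarrow> x0 \<in> S \<Longrightarrow> (\<Sum>x\<in>S. g x * (if x = x0 then 1 else 0)) = (g x0 :: complex)"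
proof -
  assume "finite S" "x0 \<in> S"
  have "(\<Sum>x\<in>S. g x * (if x = x0 then 1 else 0)) = (\<Sum>x\<in>S. if x = x0 then g x else 0)"
    by (rule sum.cong) auto
  then show ?thesis using \<open>finite S\<close> \<open>x0 \<in> S\<close> by simp
qed

lemma kernel:
  assumes "finite T" "psd T \<sigma>" "Bf T \<sigma> v v = 0"
  shows "(\<Sum>y\<in>cfgs T. \<sigma> x0 y * v y) = 0" "(\<Sum>x\<in>cfgs T. cnj (v x) * \<sigma> x y0) = 0"
proof -
  have key: "Bf T \<sigma> w v = 0 \<and> Bf T \<sigma> v w = 0" for w
  proof (rule cplx_key[where d = "Bf T \<sigma> w w"])
    fix t
    show "Im (cnj t * Bf T \<sigma> w v + t * Bf T \<sigma> v w + cnj t * t * Bf T \<sigma> w w) = 0 \<and>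
          Re (cnj t * Bf T \<sigma> w v + t * Bf T \<sigma> v w + cnj t * t * Bf T \<sigma> w w) \<ge> 0"
    proof -
      have "Im (Bf T \<sigma> (\<lambda>x. v x + t * w x) (\<lambda>x. v x + t * w x)) = 0 \<and> Re (Bf T \<sigma> (\<lambda>x. v x + t * w x) (\<lambda>x. v x + t * w x)) \<ge> 0"
        using assms(2) unfolding psd_def by blast
      then show ?thesis unfolding Bf_expand assms(3) by simp
    qed
  next
    show "Im (Bf T \<sigma> w w) = 0" using assms(2) unfolding psd_def by blast
  qed
  show "(\<Sum>y\<in>cfgs T. \<sigma> x0 y * v y) = 0"
  proof (cases "x0 \<in> cfgs T")
    case True
    have "Bf T \<sigma> (\<lambda>x. if x = x0 then 1 else 0) v = (\<Sum>y\<in>cfgs T. \<sigma> x0 y * v y)"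
      unfolding Bf_left by (rule sum_ind[OF finite_cfgs[OF assms(1)] True])
    then show ?thesis using key by metis
  next
    case False then show ?thesis using psd_zero[OF assms(2)] by simp
  qed
  show "(\<Sum>x\<in>cfgs T. cnj (v x) * \<sigma> x y0) = 0"
  proof (cases "y0 \<in> cfgs T")
    case True
    have "Bf T \<sigma> v (\<lambda>x. if x = y0 then 1 else 0) = (\<Sum>x\<in>cfgs T. cnj (v x) * \<sigma> x y0)"
      unfolding Bf_right by (rule sum_ind2[OF finite_cfgs[OF assms(1)] True])
    then show ?thesis using key by metis
  next
    case False then show ?thesis using psd_zero[OF assms(2)] by simp
  qed
qed



definition ind :: "(nat \<Rightarrow> bool) \<Rightarrow> (nat \<Rightarrow> bool) \<Rightarrow> complex" where
  "ind a = (\<lambda>x. if x = a then 1 else 0)"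

lemma Bf_ind: "finite T \<Longrightarrow> a \<in> cfgs T \<Longrightarrow> b \<in> cfgs T \<Longrightarrow> Bf T \<sigma> (ind a) (ind b) = \<sigma> a b"
  unfolding Bf_left ind_def by (subst sum_ind[OF finite_cfgs]; simp add: sum_ind2[OF finite_cfgs])

lemma psd_diag_real: assumes "finite T" "psd T \<sigma>" shows "Im (\<sigma> a a) = 0"
proof (cases "a \<in> cfgs T")
  case True
  then show ?thesis using assms Bf_ind[OF assms(1) True True, of \<sigma>] unfolding psd_def by metis
next
  case False then show ?thesis using psd_zero[OF assms(2)] by simp
qed

lemma psd_herm: assumes "finite T" "psd T \<sigma>" shows "\<sigma> b a = cnj (\<sigma> a b)"
proof (cases "a \<in> cfgs T \<and> b \<in> cfgs T")
  case True
  then have a: "a \<in> cfgs T" and b: "b \<in> cfgs T" by auto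
  have e: "Bf T \<sigma> (\<lambda>x. ind a x + t * ind b x) (\<lambda>x. ind a x + t * ind b x) =
     \<sigma> a a + cnj t * \<sigma> b a + t * \<sigma> a b + cnj t * t * \<sigma> b b" for t
    unfolding Bf_expand using Bf_ind[OF assms(1)] a b by simp
  have ra: "Im (\<sigma> a a) = 0" "Im (\<sigma> b b) = 0" using psd_diag_real[OF assms] by auto
  have "Im (\<sigma> a a + cnj 1 * \<sigma> b a + 1 * \<sigma> a b + cnj 1 * 1 * \<sigma> b b) = 0"
    using assms(2) e[of 1] unfolding psd_def by metis
  then have i1: "Im (\<sigma> b a + \<sigma> a b) = 0" using ra by simp
  have "Im (\<sigma> a a + cnj \<i> * \<sigma> b a + \<i> * \<sigma> a b + cnj \<i> * \<i> * \<sigma> b b) = 0"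
    using assms(2) e[of \<i>] unfolding psd_def by metis
  then have i2: "Re (\<sigma> a b) - Re (\<sigma> b a) = 0" using ra by simp
  show ?thesis using i1 i2 by (simp add: complex_eq_iff)
next
  case False then show ?thesis using psd_zero[OF assms(2)] by auto
qed

lemma upd_clear: "z \<in> cfgs (T - {k}) \<Longrightarrow> z(k := False) = z"
  by (auto simp: cfgs_def fun_eq_iff)

lemma upd_clear2: "z \<in> cfgs (T - {k}) \<Longrightarrow> (z(k := b))(k := False) = z"
  by (auto simp: cfgs_def fun_eq_iff)

lemma sum_split2:
  assumes "k \<in> T"
  shows "(\<Sum>x\<in>cfgs T. \<Sum>y\<in>cfgs T. h x y) = (\<Sum>x\<in>cfgs (T - {k}). \<Sum>y\<in>cfgs (T - {k}).
     h (x(k:=False)) (y(k:=False)) + h (x(k:=False)) (y(k:=True)) + h (x(k:=True)) (y(k:=False)) + h (x(k:=True)) (y(k:=True)))"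
proof -
  have "(\<Sum>x\<in>cfgs T. \<Sum>y\<in>cfgs T. h x y) = (\<Sum>x\<in>cfgs (T - {k}). (\<Sum>y\<in>cfgs T. h (x(k:=False)) y) + (\<Sum>y\<in>cfgs T. h (x(k:=True)) y))"
    by (rule sum_split[OF assms])
  also have "\<dots> = (\<Sum>x\<in>cfgs (T - {k}). (\<Sum>y\<in>cfgs (T - {k}). h (x(k:=False)) (y(k:=False)) + h (x(k:=False)) (y(k:=True)))
      + (\<Sum>y\<in>cfgs (T - {k}). h (x(k:=True)) (y(k:=False)) + h (x(k:=True)) (y(k:=True))))"
    by (simp only: sum_split[OF assms])
  also have "\<dots> = (\<Sum>x\<in>cfgs (T - {k}). \<Sum>y\<in>cfgs (T - {k}).
     h (x(k:=False)) (y(k:=False)) + h (x(k:=False)) (y(k:=True)) + h (x(k:=True)) (y(k:=False)) + h (x(k:=True)) (y(k:=True)))"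
    by (rule sum.cong[OF refl]) (simp add: sum.distrib[symmetric] add.assoc)
  finally show ?thesis .
qed

definition vecz :: "nat set \<Rightarrow> nat \<Rightarrow> (nat \<Rightarrow> bool) \<Rightarrow> (bool \<Rightarrow> complex) \<Rightarrow> (nat \<Rightarrow> bool) \<Rightarrow> complex" where
  "vecz T k z u = (\<lambda>x. if x \<in> cfgs T \<and> x(k := False) = z then u (x k) else 0)"

lemma vecz_upd: "x \<in> cfgs (T - {k}) \<Longrightarrow> k \<in> T \<Longrightarrow> vecz T k z u (x(k := c)) = (if x = z then u c else 0)"
  unfolding vecz_def using upd_clear2[of x T k c] cfgs_upd[of x T k c] by auto

lemma Bf_vecz:
  assumes "finite T" "k \<in> T" "z \<in> cfgs (T - {k})"
  shows "Bf T \<sigma> (vecz T k z u) (vecz T k z u) =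
    cnj (u False) * \<sigma> (z(k:=False)) (z(k:=False)) * u False + cnj (u False) * \<sigma> (z(k:=False)) (z(k:=True)) * u True
  + cnj (u True) * \<sigma> (z(k:=True)) (z(k:=False)) * u False + cnj (u True) * \<sigma> (z(k:=True)) (z(k:=True)) * u True"
proof -
  define C where "C = cnj (u False) * \<sigma> (z(k:=False)) (z(k:=False)) * u False + cnj (u False) * \<sigma> (z(k:=False)) (z(k:=True)) * u True
  + cnj (u True) * \<sigma> (z(k:=True)) (z(k:=False)) * u False + cnj (u True) * \<sigma> (z(k:=True)) (z(k:=True)) * u True"
  have "Bf T \<sigma> (vecz T k z u) (vecz T k z u) = (\<Sum>x\<in>cfgs (T - {k}). 
     if x = z then (\<Sum>y\<in>cfgs (T - {k}). if y = z then C else 0) else 0)"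
    unfolding Bf_def sum_split2[OF assms(2)]
  proof (intro sum.cong refl)
    fix x assume x: "x \<in> cfgs (T - {k})"
    show "(\<Sum>y\<in>cfgs (T - {k}). cnj (vecz T k z u (x(k := False))) * \<sigma> (x(k := False)) (y(k := False)) * vecz T k z u (y(k := False)) +
          cnj (vecz T k z u (x(k := False))) * \<sigma> (x(k := False)) (y(k := True)) * vecz T k z u (y(k := True)) +
          cnj (vecz T k z u (x(k := True))) * \<sigma> (x(k := True)) (y(k := False)) * vecz T k z u (y(k := False)) +
          cnj (vecz T k z u (x(k := True))) * \<sigma> (x(k := True)) (y(k := True)) * vecz T k z u (y(k := True))) =
         (if x = z then \<Sum>y\<in>cfgs (T - {k}). if y = z then C else 0 else 0)"
    proof (cases "x = z")
      case True
      have "x \<in> cfgs (T - {k})" using x .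
      then show ?thesis unfolding True by (simp only: refl if_True) (intro sum.cong refl; auto simp: vecz_upd assms(2) C_def)
    next
      case False
      then show ?thesis using x by (auto intro!: sum.neutral simp: vecz_upd assms(2))
    qed
  qed
  also have "\<dots> = cnj (u False) * \<sigma> (z(k:=False)) (z(k:=False)) * u False + cnj (u False) * \<sigma> (z(k:=False)) (z(k:=True)) * u True
  + cnj (u True) * \<sigma> (z(k:=True)) (z(k:=False)) * u False + cnj (u True) * \<sigma> (z(k:=True)) (z(k:=True)) * u True"
    using assms finite_cfgs[of "T - {k}"] by (simp add: C_def)
  finally show ?thesis .
qed

lemma sum_vecz_right:
  assumes "k \<in> T" "z \<in> cfgs (T - {k})" "finite T"
  shows "(\<Sum>y\<in>cfgs T. g y * vecz T k z u y) = g (z(k:=False)) * u False + g (z(k:=True)) * u True"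
proof -
  have "(\<Sum>y\<in>cfgs T. g y * vecz T k z u y) = (\<Sum>y\<in>cfgs (T - {k}). if y = z then g (z(k:=False)) * u False + g (z(k:=True)) * u True else 0)"
    unfolding sum_split[OF assms(1)] by (intro sum.cong refl) (auto simp: vecz_upd assms(1))
  also have "\<dots> = g (z(k:=False)) * u False + g (z(k:=True)) * u True"
    using assms(2) finite_cfgs[of "T - {k}"] assms(3) by simp
  finally show ?thesis .
qed

lemma sum_vecz_left:
  assumes "k \<in> T" "z \<in> cfgs (T - {k})" "finite T"
  shows "(\<Sum>y\<in>cfgs T. cnj (vecz T k z u y) * g y) = cnj (u False) * g (z(k:=False)) + cnj (u True) * g (z(k:=True))"
proof -
  have "(\<Sum>y\<in>cfgs T. cnj (vecz T k z u y) * g y) = (\<Sum>y\<in>cfgs (T - {k}). if y = z then cnj (u False) * g (z(k:=False)) + cnj (u True) * g (z(k:=True)) else 0)"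
    unfolding sum_split[OF assms(1)] by (intro sum.cong refl) (auto simp: vecz_upd assms(1))
  also have "\<dots> = cnj (u False) * g (z(k:=False)) + cnj (u True) * g (z(k:=True))"
    using assms(2) finite_cfgs[of "T - {k}"] assms(3) by simp
  finally show ?thesis .
qed

definition sm :: "nat set \<Rightarrow> op \<Rightarrow> nat \<Rightarrow> bool \<Rightarrow> bool \<Rightarrow> complex" where
  "sm T \<sigma> k a b = (\<Sum>z\<in>cfgs (T - {k}). \<sigma> (z(k := a)) (z(k := b)))"

definition q2 :: "(bool \<Rightarrow> bool \<Rightarrow> complex) \<Rightarrow> (bool \<Rightarrow> complex) \<Rightarrow> complex" where
  "q2 m u = cnj (u False) * m False False * u False + cnj (u False) * m False True * u True
    + cnj (u True) * m True False * u False + cnj (u True) * m True True * u True"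

definition psd2 :: "(bool \<Rightarrow> bool \<Rightarrow> complex) \<Rightarrow> bool" where
  "psd2 m \<longleftrightarrow> (\<forall>u. Im (q2 m u) = 0 \<and> Re (q2 m u) \<ge> 0)"

lemma q2_sm: assumes "finite T" "k \<in> T"
  shows "q2 (sm T \<sigma> k) u = (\<Sum>z\<in>cfgs (T - {k}). Bf T \<sigma> (vecz T k z u) (vecz T k z u))"
proof -
  have "(\<Sum>z\<in>cfgs (T - {k}). Bf T \<sigma> (vecz T k z u) (vecz T k z u)) = (\<Sum>z\<in>cfgs (T - {k}). 
    cnj (u False) * \<sigma> (z(k:=False)) (z(k:=False)) * u False + cnj (u False) * \<sigma> (z(k:=False)) (z(k:=True)) * u True
  + cnj (u True) * \<sigma> (z(k:=True)) (z(k:=False)) * u False + cnj (u True) * \<sigma> (z(k:=True)) (z(k:=True)) * u True)"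
    by (intro sum.cong refl Bf_vecz assms)
  then show ?thesis unfolding q2_def sm_def
    by (simp add: sum.distrib sum_distrib_left sum_distrib_right)
qed

lemma psd2_sm: assumes "finite T" "k \<in> T" "psd T \<sigma>" shows "psd2 (sm T \<sigma> k)"
  unfolding psd2_def q2_sm[OF assms(1,2)]
proof
  fix u
  have "\<And>z. Im (Bf T \<sigma> (vecz T k z u) (vecz T k z u)) = 0 \<and> Re (Bf T \<sigma> (vecz T k z u) (vecz T k z u)) \<ge> 0"
    using assms(3) unfolding psd_def by blast
  then show "Im (\<Sum>z\<in>cfgs (T - {k}). Bf T \<sigma> (vecz T k z u) (vecz T k z u)) = 0 \<and>
       0 \<le> Re (\<Sum>z\<in>cfgs (T - {k}). Bf T \<sigma> (vecz T k z u) (vecz T k z u))"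
    by (simp add: Im_sum Re_sum sum_nonneg)
qed

definition crit :: "(bool \<Rightarrow> bool \<Rightarrow> complex) \<Rightarrow> bool" where
  "crit m \<longleftrightarrow> Im (m False False) = 0 \<and> Re (m False False) \<ge> 0 \<and> Im (m True True) = 0 \<and> Re (m True True) \<ge> 0 \<and>
     m True False = cnj (m False True) \<and> (cmod (m False True))^2 \<le> Re (m False False) * Re (m True True)"

lemma psd2_crit: assumes "psd2 m" shows "crit m"
proof -
  have P: "Im (q2 m u) = 0 \<and> Re (q2 m u) \<ge> 0" for u using assms unfolding psd2_def by blast
  have d1: "Im (m False False) = 0 \<and> Re (m False False) \<ge> 0" using P[of "\<lambda>b. if b then 0 else 1"] by (simp add: q2_def)
  have d2: "Im (m True True) = 0 \<and> Re (m True True) \<ge> 0" using P[of "\<lambda>b. if b then 1 else 0"] by (simp add: q2_def)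
  have h1: "Im (m False True + m True False) = 0" using P[of "\<lambda>b. 1"] d1 d2 by (simp add: q2_def)
  have h2: "Re (m False True) - Re (m True False) = 0" using P[of "\<lambda>b. if b then \<i> else 1"] d1 d2 by (simp add: q2_def)
  have herm: "m True False = cnj (m False True)" using h1 h2 by (simp add: complex_eq_iff)
  obtain p q c where pq: "m False False = of_real p" "m True True = of_real q" "m False True = c" "m True False = cnj c"
    "p \<ge> 0" "q \<ge> 0"
    using d1 d2 herm by (metis complex_eq_iff complex_of_real_def Re_complex_of_real Im_complex_of_real)
  have det: "(cmod c)^2 \<le> p * q"
  proof (cases "p = 0")
    case True
    have "cnj c = 0 \<and> c = 0"
    proof (rule cplx_key[where d = "of_real q"])
      fix t
      have "q2 m (\<lambda>b. if b then t else 1) = cnj t * cnj c + t * c + cnj t * t * of_real q"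
        using pq True by (simp add: q2_def algebra_simps)
      then show "Im (cnj t * cnj c + t * c + cnj t * t * of_real q) = 0 \<and> Re (cnj t * cnj c + t * c + cnj t * t * of_real q) \<ge> 0"
        using P by metis
    qed simp
    then show ?thesis using True by simp
  next
    case False
    then have p: "p > 0" using pq by simp
    have "q2 m (\<lambda>b. if b then of_real p else - c) = of_real p * (of_real p * of_real q - c * cnj c)"
      using pq by (simp add: q2_def algebra_simps)
    also have "\<dots> = of_real (p * (p * q - (cmod c)^2))" 
    proof -
      have "c * cnj c = of_real ((cmod c)^2)" using complex_norm_square[of c] by simp
      then show ?thesis by simp
    qed
    finally have "p * (p * q - (cmod c)^2) \<ge> 0" using P by (metis Re_complex_of_real)
    then show ?thesis using p by (simp add: zero_le_mult_iff)
  qed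
  show ?thesis unfolding crit_def using pq det by simp
qed

lemma crit_decomp:
  assumes "crit m"
  shows "\<exists>w1 w2. \<forall>a b. m a b = w1 a * cnj (w1 b) + w2 a * cnj (w2 b)"
proof -
  obtain p q c where pq: "m False False = of_real p" "m True True = of_real q" "m False True = c" "m True False = cnj c"
    "p \<ge> 0" "q \<ge> 0" "(cmod c)^2 \<le> p * q"
    using assms unfolding crit_def by (metis complex_eq_iff complex_of_real_def Re_complex_of_real Im_complex_of_real)
  show ?thesis
  proof (cases "p = 0")
    case True
    then have c: "c = 0" using pq by simp
    define w1 where "w1 = (\<lambda>b. if b then complex_of_real (sqrt q) else 0)"
    have "m a b = w1 a * cnj (w1 b) + (\<lambda>_. 0) a * cnj ((\<lambda>_. 0) b)" for a b
      using pq c True by (cases a; cases b) (auto simp: w1_def simp flip: of_real_mult)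
    then show ?thesis by (intro exI[of _ w1] exI[of _ "\<lambda>_. 0"]) simp
  next
    case False
    then have p: "p > 0" using pq by simp
    define r where "r = q - (cmod c)^2 / p"
    have r: "r \<ge> 0" using pq p by (simp add: r_def field_simps)
    define w1 where "w1 = (\<lambda>b. if b then cnj c / of_real (sqrt p) else complex_of_real (sqrt p))"
    define w2 where "w2 = (\<lambda>b. if b then complex_of_real (sqrt r) else 0)"
    have sp: "complex_of_real (sqrt p) * complex_of_real (sqrt p) = of_real p" using p
      by (simp flip: of_real_mult)
    have "m a b = w1 a * cnj (w1 b) + w2 a * cnj (w2 b)" for a b
    proof (cases a; cases b)
      assume "a" "b"
      have "w1 a * cnj (w1 b) + w2 a * cnj (w2 b) = cnj c * c / of_real p + of_real r"
        using \<open>a\<close> \<open>b\<close> p r by (simp add: w1_def w2_def sp flip: of_real_mult)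
      also have "\<dots> = of_real q"
      proof -
        have "cnj c * c = of_real ((cmod c)^2)" using complex_norm_square[of c] by (simp add: mult.commute)
        then show ?thesis using p unfolding r_def by (simp add: field_simps)
      qed
      finally show ?thesis using \<open>a\<close> \<open>b\<close> pq by simp
    next
      assume "a" "\<not> b"
      then show ?thesis using p pq by (simp add: w1_def w2_def)
    next
      assume "\<not> a" "b"
      then show ?thesis using p pq by (simp add: w1_def w2_def)
    next
      assume "\<not> a" "\<not> b"
      then show ?thesis using p pq by (simp add: w1_def w2_def sp flip: of_real_mult)
    qed
    then show ?thesis by blast
  qed
qed




lemma sum_nonneg_zero_each:
  assumes "finite S" "\<And>z. z \<in> S \<Longrightarrow> Im (f z) = 0 \<and> Re (f z) \<ge> 0" "sum f S = (0::complex)" "z \<in> S"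
  shows "f z = 0"
proof -
  have "(\<Sum>z\<in>S. Re (f z)) = 0" using assms(3) by (simp add: Re_sum[symmetric])
  moreover have "\<forall>z\<in>S. Re (f z) \<ge> 0" using assms(2) by blast
  ultimately have "\<forall>z\<in>S. Re (f z) = 0" using sum_nonneg_eq_0_iff[OF assms(1), of "\<lambda>z. Re (f z)"] by simp
  then show ?thesis using assms(2,4) by (simp add: complex_eq_iff)
qed

lemma tr_split: assumes "k \<in> T" shows "tr T \<sigma> = sm T \<sigma> k False False + sm T \<sigma> k True True"
proof -
  have "tr T \<sigma> = (\<Sum>z\<in>cfgs (T - {k}). \<sigma> (z(k:=False)) (z(k:=False)) + \<sigma> (z(k:=True)) (z(k:=True)))"
    unfolding tr_def by (rule sum_split[OF assms])
  then show ?thesis unfolding sm_def by (simp only: sum.distrib)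
qed

lemma gl1: "(A::complex) * b + C * (- d) = 0 \<longleftrightarrow> b * A = d * C"
  by (metis add.inverse_neutral add_uminus_conv_diff eq_iff_diff_eq_0 mult.commute mult_minus_right)

lemma gl2: "cnj (b::complex) * A + cnj (- d) * C = 0 \<longleftrightarrow> cnj b * A = cnj d * C"
  by (metis add_uminus_conv_diff complex_cnj_minus eq_iff_diff_eq_0 mult_minus_left)

lemma factor:
  assumes fin: "finite T" and k: "k \<in> T" and ps: "psd T \<sigma>"
    and det: "sm T \<sigma> k True True * sm T \<sigma> k False False = sm T \<sigma> k False True * sm T \<sigma> k True False"
    and x: "x \<in> cfgs T" and y: "y \<in> cfgs T"
  shows "tr T \<sigma> * \<sigma> x y = sm T \<sigma> k (x k) (y k) * (\<sigma> (x(k:=False)) (y(k:=False)) + \<sigma> (x(k:=True)) (y(k:=True)))"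
proof -
  define m where "m = sm T \<sigma> k"
  have cr: "crit m" unfolding m_def by (intro psd2_crit psd2_sm fin k ps)
  have herm: "m True False = cnj (m False True)" and rFF: "cnj (m False False) = m False False"
    and rTT: "cnj (m True True) = m True True"
    using cr unfolding crit_def by (auto simp: complex_eq_iff)
  have ker: "(\<forall>r. \<sigma> r (z(k:=False)) * u False + \<sigma> r (z(k:=True)) * u True = 0) \<and>
             (\<forall>c. cnj (u False) * \<sigma> (z(k:=False)) c + cnj (u True) * \<sigma> (z(k:=True)) c = 0)"
    if q0: "q2 m u = 0" and z: "z \<in> cfgs (T - {k})" for u z
  proof -
    have "Bf T \<sigma> (vecz T k z u) (vecz T k z u) = 0"
    proof (rule sum_nonneg_zero_each[where S = "cfgs (T - {k})" and f = "\<lambda>z. Bf T \<sigma> (vecz T k z u) (vecz T k z u)"])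
      show "finite (cfgs (T - {k}))" using fin finite_cfgs by blast
      show "\<And>z. Im (Bf T \<sigma> (vecz T k z u) (vecz T k z u)) = 0 \<and> Re (Bf T \<sigma> (vecz T k z u) (vecz T k z u)) \<ge> 0"
        using ps unfolding psd_def by blast
      show "(\<Sum>z\<in>cfgs (T - {k}). Bf T \<sigma> (vecz T k z u) (vecz T k z u)) = 0"
        using q0 q2_sm[OF fin k] unfolding m_def by metis
    qed (rule z)
    note b0 = this
    have "\<forall>r. (\<Sum>y\<in>cfgs T. \<sigma> r y * vecz T k z u y) = 0" using kernel(1)[OF fin ps b0] by blast
    moreover have "\<forall>c. (\<Sum>x\<in>cfgs T. cnj (vecz T k z u x) * \<sigma> x c) = 0" using kernel(2)[OF fin ps b0] by blast
    ultimately show ?thesis by (simp only: sum_vecz_right[OF k z fin] sum_vecz_left[OF k z fin]) simp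
  qed
  define u1 where "u1 = (\<lambda>b. if b then - m False False else m False True)"
  define u2 where "u2 = (\<lambda>b. if b then - m True False else m True True)"
  have det': "m True True * m False False = m False True * m True False" using det unfolding m_def .
  have q1: "q2 m u1 = 0"
  proof -
    have "q2 m u1 = cnj (m False False) * (m True True * m False False - m False True * m True False)"
      unfolding q2_def u1_def by (simp add: algebra_simps)
    then show ?thesis using det' by simp
  qed
  have q2': "q2 m u2 = 0"
  proof -
    have "q2 m u2 = cnj (m True True) * (m True True * m False False - m False True * m True False)"
      unfolding q2_def u2_def by (simp add: algebra_simps)
    then show ?thesis using det' by simp
  qed
  define x' where "x' = x(k:=False)"
  define y' where "y' = y(k:=False)"
  have x': "x' \<in> cfgs (T - {k})" and y': "y' \<in> cfgs (T - {k})" using x y cfgs_clear unfolding x'_def y'_def by auto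
  define s where "s = (\<lambda>a b. \<sigma> (x'(k:=a)) (y'(k:=b)))"
  have xy: "\<sigma> x y = s (x k) (y k)" unfolding s_def x'_def y'_def by simp
  have C1: "m False True * s a False = m False False * s a True" for a
  proof -
    have "\<sigma> (x'(k:=a)) (y'(k:=False)) * u1 False + \<sigma> (x'(k:=a)) (y'(k:=True)) * u1 True = 0" using ker[OF q1 y'] by blast
    then show ?thesis unfolding u1_def s_def by (simp add: gl1 mult.commute)
  qed
  have C2: "m True True * s a False = m True False * s a True" for a
  proof -
    have "\<sigma> (x'(k:=a)) (y'(k:=False)) * u2 False + \<sigma> (x'(k:=a)) (y'(k:=True)) * u2 True = 0" using ker[OF q2' y'] by blast
    then show ?thesis unfolding u2_def s_def by (simp add: gl1 mult.commute)
  qed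
  have R1: "m True False * s False b = m False False * s True b" for b
  proof -
    have "cnj (u1 False) * \<sigma> (x'(k:=False)) (y'(k:=b)) + cnj (u1 True) * \<sigma> (x'(k:=True)) (y'(k:=b)) = 0" using ker[OF q1 x'] by blast
    then have "cnj (m False True) * s False b = cnj (m False False) * s True b" unfolding u1_def s_def by (simp add: gl2)
    then show ?thesis using herm rFF by simp
  qed
  have R2: "m True True * s False b = m False True * s True b" for b
  proof -
    have "cnj (u2 False) * \<sigma> (x'(k:=False)) (y'(k:=b)) + cnj (u2 True) * \<sigma> (x'(k:=True)) (y'(k:=b)) = 0" using ker[OF q2' x'] by blast
    then have "cnj (m True True) * s False b = cnj (m True False) * s True b" unfolding u2_def s_def by (simp add: gl2)
    then show ?thesis using herm rTT by simp
  qed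
  have main: "(m False False + m True True) * s a b = m a b * (s False False + s True True)" for a b
  proof (cases a; cases b)
    assume "a" "b"
    have e: "m True True * s False False = m False False * s True True" using R2[of False] C1[of True] by simp
    show ?thesis using \<open>a\<close> \<open>b\<close> e by (simp add: distrib_left distrib_right)
  next
    assume "a" "\<not> b"
    show ?thesis using \<open>a\<close> \<open>\<not> b\<close> R1[of False] C2[of True] by (simp add: distrib_left distrib_right)
  next
    assume "\<not> a" "b"
    show ?thesis using \<open>\<not> a\<close> \<open>b\<close> C1[of False] R2[of True] by (simp add: distrib_left distrib_right)
  next
    assume "\<not> a" "\<not> b"
    have e: "m True True * s False False = m False False * s True True" using R2[of False] C1[of True] by simp
    show ?thesis using \<open>\<not> a\<close> \<open>\<not> b\<close> e by (simp add: distrib_left distrib_right)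
  qed
  have tr: "tr T \<sigma> = m False False + m True True" unfolding m_def by (rule tr_split[OF k])
  have "tr T \<sigma> * \<sigma> x y = m (x k) (y k) * (s False False + s True True)"
    unfolding tr xy by (rule main)
  moreover have "s False False = \<sigma> (x(k:=False)) (y(k:=False))" "s True True = \<sigma> (x(k:=True)) (y(k:=True))"
    unfolding s_def x'_def y'_def by simp_all
  ultimately show ?thesis unfolding m_def by simp
qed




definition red :: "nat set \<Rightarrow> nat \<Rightarrow> op \<Rightarrow> op" where
  "red T k \<sigma> = (\<lambda>x y. if x \<in> cfgs (T - {k}) \<and> y \<in> cfgs (T - {k})
      then \<sigma> (x(k:=False)) (y(k:=False)) + \<sigma> (x(k:=True)) (y(k:=True)) else 0)"

definition vb :: "nat set \<Rightarrow> nat \<Rightarrow> bool \<Rightarrow> ((nat \<Rightarrow> bool) \<Rightarrow> complex) \<Rightarrow> (nat \<Rightarrow> bool) \<Rightarrow> complex" where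
  "vb T k b v = (\<lambda>x. if x \<in> cfgs T \<and> x k = b then v (x(k:=False)) else 0)"

lemma vb_upd: "x \<in> cfgs (T - {k}) \<Longrightarrow> k \<in> T \<Longrightarrow> vb T k b v (x(k := c)) = (if c = b then v x else 0)"
  unfolding vb_def using upd_clear2[of x T k c] cfgs_upd[of x T k c] by auto

lemma Bf_vb:
  assumes "k \<in> T"
  shows "Bf T \<sigma> (vb T k b v) (vb T k b v) = (\<Sum>x\<in>cfgs (T - {k}). \<Sum>y\<in>cfgs (T - {k}). cnj (v x) * \<sigma> (x(k:=b)) (y(k:=b)) * v y)"
  unfolding Bf_def sum_split2[OF assms]
  by (intro sum.cong refl) (cases b; simp add: vb_upd assms)

lemma red_psd:
  assumes "finite T" "k \<in> T" "psd T \<sigma>"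
  shows "psd (T - {k}) (red T k \<sigma>)"
proof -
  have e: "Bf (T - {k}) (red T k \<sigma>) v v = Bf T \<sigma> (vb T k False v) (vb T k False v) + Bf T \<sigma> (vb T k True v) (vb T k True v)" for v
  proof -
    have "Bf (T - {k}) (red T k \<sigma>) v v = (\<Sum>x\<in>cfgs (T - {k}). \<Sum>y\<in>cfgs (T - {k}). 
       cnj (v x) * \<sigma> (x(k:=False)) (y(k:=False)) * v y + cnj (v x) * \<sigma> (x(k:=True)) (y(k:=True)) * v y)"
      unfolding Bf_def red_def by (intro sum.cong refl) (simp add: algebra_simps)
    then show ?thesis unfolding Bf_vb[OF assms(2)] by (simp only: sum.distrib)
  qed
  show ?thesis unfolding psd_def
  proof (intro conjI allI impI)
    fix x y assume "x \<notin> cfgs (T - {k}) \<or> y \<notin> cfgs (T - {k})"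
    then show "red T k \<sigma> x y = 0" unfolding red_def by auto
  next
    fix v
    have "Im (Bf T \<sigma> w w) = 0 \<and> Re (Bf T \<sigma> w w) \<ge> 0" for w using assms(3) unfolding psd_def by blast
    then show "Im (Bf (T - {k}) (red T k \<sigma>) v v) = 0" "Re (Bf (T - {k}) (red T k \<sigma>) v v) \<ge> 0"
      unfolding e by (simp_all add: add_nonneg_nonneg)
  qed
qed

lemma red_tr: assumes "k \<in> T" shows "tr (T - {k}) (red T k \<sigma>) = tr T \<sigma>"
  unfolding tr_def sum_split[OF assms] red_def by (intro sum.cong refl) simp

lemma red_sm:
  assumes "k \<in> T" "i \<in> T" "i \<noteq> k"
  shows "sm (T - {k}) (red T k \<sigma>) i = sm T \<sigma> i"
proof (intro ext)
  fix a b
  have kk: "k \<in> T - {i}" using assms by auto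
  have eq: "T - {i} - {k} = T - {k} - {i}" by auto
  have "sm T \<sigma> i a b = (\<Sum>z\<in>cfgs (T - {k} - {i}). \<sigma> (z(k:=False, i:=a)) (z(k:=False, i:=b)) + \<sigma> (z(k:=True, i:=a)) (z(k:=True, i:=b)))"
    unfolding sm_def sum_split[OF kk] eq ..
  also have "\<dots> = sm (T - {k}) (red T k \<sigma>) i a b"
    unfolding sm_def red_def
  proof (intro sum.cong refl)
    fix z assume z: "z \<in> cfgs (T - {k} - {i})"
    have i: "i \<in> T - {k}" using assms by auto
    have "z(i:=a) \<in> cfgs (T - {k})" "z(i:=b) \<in> cfgs (T - {k})" using cfgs_upd[OF z i] by auto
    then show "\<sigma> (z(k:=False, i:=a)) (z(k:=False, i:=b)) + \<sigma> (z(k:=True, i:=a)) (z(k:=True, i:=b)) =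
      (if z(i := a) \<in> cfgs (T - {k}) \<and> z(i := b) \<in> cfgs (T - {k})
       then \<sigma> (z(i := a, k := False)) (z(i := b, k := False)) + \<sigma> (z(i := a, k := True)) (z(i := b, k := True)) else 0)"
      using assms(3) by (simp add: fun_upd_twist)
  qed
  finally show "sm (T - {k}) (red T k \<sigma>) i a b = sm T \<sigma> i a b" ..
qed

definition tensor :: "nat \<Rightarrow> op \<Rightarrow> (bool \<Rightarrow> bool \<Rightarrow> complex) \<Rightarrow> op" where
  "tensor k A B = (\<lambda>x y. A (x(k:=False)) (y(k:=False)) * B (x k) (y k))"

lemma cfgs_out: "x \<in> cfgs S \<Longrightarrow> k \<notin> S \<Longrightarrow> x k = False" by (auto simp: cfgs_def)

lemma ins_diff: "k \<notin> S \<Longrightarrow> insert k S - {k} = S" by auto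

lemma tensor_psd:
  assumes fin: "finite S" and k: "k \<notin> S" and A: "psd S A" and B: "crit B"
  shows "psd (insert k S) (tensor k A B)"
proof -
  obtain w1 w2 where w: "\<And>a b. B a b = w1 a * cnj (w1 b) + w2 a * cnj (w2 b)" using crit_decomp[OF B] by blast
  define g where "g = (\<lambda>w v y. cnj (w False) * v (y(k:=False)) + cnj (w True) * v (y(k:=True)))"
  have kk: "k \<in> insert k S" by simp
  have e: "Bf (insert k S) (tensor k A B) v v = Bf S A (g w1 v) (g w1 v) + Bf S A (g w2 v) (g w2 v)" for v
  proof -
    have "Bf (insert k S) (tensor k A B) v v = (\<Sum>x\<in>cfgs S. \<Sum>y\<in>cfgs S. 
        cnj (g w1 v x) * A x y * g w1 v y + cnj (g w2 v x) * A x y * g w2 v y)"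
      unfolding Bf_def sum_split2[OF kk] ins_diff[OF k]
    proof (intro sum.cong refl)
      fix x y assume x: "x \<in> cfgs S" and y: "y \<in> cfgs S"
      have xk: "x(k:=c, k:=False) = x" "y(k:=c, k:=False) = y" for c
        using x y k by (auto simp: cfgs_def fun_eq_iff)
      show "cnj (v (x(k := False))) * tensor k A B (x(k := False)) (y(k := False)) * v (y(k := False)) +
          cnj (v (x(k := False))) * tensor k A B (x(k := False)) (y(k := True)) * v (y(k := True)) +
          cnj (v (x(k := True))) * tensor k A B (x(k := True)) (y(k := False)) * v (y(k := False)) +
          cnj (v (x(k := True))) * tensor k A B (x(k := True)) (y(k := True)) * v (y(k := True)) =
          cnj (g w1 v x) * A x y * g w1 v y + cnj (g w2 v x) * A x y * g w2 v y"
        unfolding tensor_def g_def w xk by (simp add: algebra_simps)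
    qed
    then show ?thesis unfolding Bf_def by (simp only: sum.distrib)
  qed
  show ?thesis unfolding psd_def
  proof (intro conjI allI impI)
    fix x y assume "x \<notin> cfgs (insert k S) \<or> y \<notin> cfgs (insert k S)"
    then have "x(k:=False) \<notin> cfgs S \<or> y(k:=False) \<notin> cfgs S" by (auto simp: cfgs_def)
    then show "tensor k A B x y = 0" unfolding tensor_def using psd_zero[OF A] by auto
  next
    fix v
    have "Im (Bf S A w w) = 0 \<and> Re (Bf S A w w) \<ge> 0" for w using A unfolding psd_def by blast
    then show "Im (Bf (insert k S) (tensor k A B) v v) = 0" "Re (Bf (insert k S) (tensor k A B) v v) \<ge> 0"
      unfolding e by (simp_all add: add_nonneg_nonneg)
  qed
qed

lemma tensor_tr:
  assumes "k \<notin> S" shows "tr (insert k S) (tensor k A B) = tr S A * (B False False + B True True)"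
proof -
  have "tr (insert k S) (tensor k A B) = (\<Sum>z\<in>cfgs S. A z z * B False False + A z z * B True True)"
    unfolding tr_def sum_split[OF insertI1] ins_diff[OF assms] tensor_def
    by (intro sum.cong refl) (simp add: upd_clear[of _ "insert k S" k, unfolded ins_diff[OF assms]] cfgs_out[OF _ assms])
  then show ?thesis unfolding tr_def by (simp add: sum.distrib sum_distrib_right distrib_left)
qed

lemma tensor_sm_k:
  assumes "k \<notin> S" shows "sm (insert k S) (tensor k A B) k a b = tr S A * B a b"
  unfolding sm_def tr_def ins_diff[OF assms] tensor_def sum_distrib_right
  by (intro sum.cong refl) (simp add: upd_clear[of _ "insert k S" k, unfolded ins_diff[OF assms]])

lemma tensor_sm_l:
  assumes "k \<notin> S" "l \<in> S"
  shows "sm (insert k S) (tensor k A B) l a b = sm S A l a b * (B False False + B True True)"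
proof -
  have kk: "k \<in> insert k S - {l}" using assms by auto
  have eq: "insert k S - {l} - {k} = S - {l}" using assms by auto
  have "sm (insert k S) (tensor k A B) l a b = (\<Sum>z\<in>cfgs (S - {l}). A (z(l:=a)) (z(l:=b)) * B False False + A (z(l:=a)) (z(l:=b)) * B True True)"
    unfolding sm_def sum_split[OF kk] eq tensor_def
  proof (intro sum.cong refl)
    fix z assume z: "z \<in> cfgs (S - {l})"
    have zk: "z k = False" using z assms by (auto simp: cfgs_def)
    have kl: "k \<noteq> l" using assms by auto
    have "z(k := c, l := a, k := False) = z(l := a)" for c a using zk assms by (auto simp: fun_eq_iff)
    then show "A (z(k := False, l := a, k := False)) (z(k := False, l := b, k := False)) * B ((z(k := False, l := a)) k) ((z(k := False, l := b)) k) +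
         A (z(k := True, l := a, k := False)) (z(k := True, l := b, k := False)) * B ((z(k := True, l := a)) k) ((z(k := True, l := b)) k) =
         A (z(l := a)) (z(l := b)) * B False False + A (z(l := a)) (z(l := b)) * B True True"
      using kl by simp
  qed
  then show ?thesis unfolding sm_def by (simp add: sum.distrib sum_distrib_right distrib_left)
qed




lemma cfgs_empty: "cfgs {} = {\<lambda>_. False}"
  by (auto simp: cfgs_def fun_eq_iff)

definition pure :: "(bool \<Rightarrow> bool \<Rightarrow> complex) \<Rightarrow> bool" where
  "pure m \<longleftrightarrow> m True True * m False False = m False True * m True False"

lemma uniq:
  assumes "finite T"
  shows "psd T \<sigma> \<Longrightarrow> psd T \<rho> \<Longrightarrow> tr T \<sigma> = 1 \<Longrightarrow> tr T \<rho> = 1 \<Longrightarrow> (\<forall>i\<in>T. sm T \<sigma> i = sm T \<rho> i) \<Longrightarrow>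
    (\<forall>i\<in>T - {j}. pure (sm T \<rho> i)) \<Longrightarrow> \<sigma> = \<rho>"
  using assms
proof (induct T arbitrary: \<sigma> \<rho> rule: finite_psubset_induct)
  case (psubset T)
  show ?case
  proof (cases "\<exists>k\<in>T - {j}. True")
    case True
    then obtain k where k: "k \<in> T" "k \<noteq> j" by blast
    have sub: "T - {k} \<subset> T" using k by auto
    have eqr: "red T k \<sigma> = red T k \<rho>"
    proof (rule psubset.hyps(2)[OF sub])
      show "psd (T - {k}) (red T k \<sigma>)" "psd (T - {k}) (red T k \<rho>)"
        using red_psd psubset k by auto
      show "tr (T - {k}) (red T k \<sigma>) = 1" "tr (T - {k}) (red T k \<rho>) = 1"
        using red_tr[OF k(1)] psubset by auto
      show "\<forall>i\<in>T - {k}. sm (T - {k}) (red T k \<sigma>) i = sm (T - {k}) (red T k \<rho>) i"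
        using red_sm[OF k(1)] psubset by auto
      show "\<forall>i\<in>T - {k} - {j}. pure (sm (T - {k}) (red T k \<rho>) i)"
        using red_sm[OF k(1)] psubset by auto
    qed
    have smk: "sm T \<sigma> k = sm T \<rho> k" using psubset k by auto
    have pk: "pure (sm T \<rho> k)" using psubset k by auto
    show ?thesis
    proof (intro ext)
      fix x y
      show "\<sigma> x y = \<rho> x y"
      proof (cases "x \<in> cfgs T \<and> y \<in> cfgs T")
        case True
        then have x: "x \<in> cfgs T" and y: "y \<in> cfgs T" by auto
        have xc: "x(k:=False) \<in> cfgs (T - {k})" "y(k:=False) \<in> cfgs (T - {k})" using x y cfgs_clear by auto
        have rv: "red T k \<tau> (x(k:=False)) (y(k:=False)) = \<tau> (x(k:=False)) (y(k:=False)) + \<tau> (x(k:=True)) (y(k:=True))" for \<tau>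
          unfolding red_def by (simp only: xc fun_upd_upd conj_absorb if_True)
        have "tr T \<sigma> * \<sigma> x y = sm T \<sigma> k (x k) (y k) * red T k \<sigma> (x(k:=False)) (y(k:=False))"
          unfolding rv by (rule factor[OF psubset.hyps(1) k(1) psubset.prems(1) _ x y]) (use pk smk in \<open>simp add: pure_def\<close>)
        moreover have "tr T \<rho> * \<rho> x y = sm T \<rho> k (x k) (y k) * red T k \<rho> (x(k:=False)) (y(k:=False))"
          unfolding rv by (rule factor[OF psubset.hyps(1) k(1) psubset.prems(2) _ x y]) (use pk in \<open>simp add: pure_def\<close>)
        ultimately show ?thesis using eqr smk psubset by simp
      next
        case False
        then show ?thesis using psd_zero psubset by metis
      qed
    qed
  next
    case False
    then have "T = {} \<or> T = {j}" by auto
    then show ?thesis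
    proof
      assume T: "T = {}"
      show ?thesis
      proof (intro ext)
        fix x y
        show "\<sigma> x y = \<rho> x y"
        proof (cases "x \<in> cfgs T \<and> y \<in> cfgs T")
          case True
          then have "x = (\<lambda>_. False)" "y = (\<lambda>_. False)" using T cfgs_empty by auto
          moreover have "tr T \<sigma> = \<sigma> (\<lambda>_. False) (\<lambda>_. False)" "tr T \<rho> = \<rho> (\<lambda>_. False) (\<lambda>_. False)"
            unfolding tr_def T cfgs_empty by auto
          ultimately show ?thesis using psubset by simp
        next
          case False
          then show ?thesis using psd_zero psubset by metis
        qed
      qed
    next
      assume T: "T = {j}"
      show ?thesis
      proof (intro ext)
        fix x y
        show "\<sigma> x y = \<rho> x y"
        proof (cases "x \<in> cfgs T \<and> y \<in> cfgs T")
          case True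
          then have xy: "(\<lambda>_. False)(j := x j) = x" "(\<lambda>_. False)(j := y j) = y" using T by (auto simp: cfgs_def fun_eq_iff)
          have "sm T \<sigma> j (x j) (y j) = \<sigma> x y" "sm T \<rho> j (x j) (y j) = \<rho> x y"
            unfolding sm_def T by (simp_all add: cfgs_empty xy)
          moreover have "sm T \<sigma> j = sm T \<rho> j" using psubset T by auto
          ultimately show ?thesis by metis
        next
          case False
          then show ?thesis using psd_zero psubset by metis
        qed
      qed
    qed
  qed
qed



lemma det2: "det (mat 2 2 f) = f (0,0) * f (1,1) - f (0,1) * (f (1,0) :: 'a :: comm_ring_1)"
proof -
  have "det (mat 2 2 f) = (\<Sum>i<2. mat 2 2 f $$ (i,0) * cofactor (mat 2 2 f) i 0)"
    by (rule laplace_expansion_column) auto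
  also have "\<dots> = f (0,0) * cofactor (mat 2 2 f) 0 0 + f (1,0) * cofactor (mat 2 2 f) 1 0"
    by (simp add: numeral_2_eq_2)
  also have "cofactor (mat 2 2 f) 0 0 = f (1,1)"
    unfolding cofactor_def by (subst det_single) (auto simp: mat_delete_def insert_index_def)
  also have "cofactor (mat 2 2 f) 1 0 = - f (0,1)"
    unfolding cofactor_def by (subst det_single) (auto simp: mat_delete_def insert_index_def)
  finally show ?thesis by (simp add: algebra_simps)
qed
lemma rank1_det: assumes "vec_space.rank 2 (mat 2 2 f) = 1" shows "det (mat 2 2 (f :: nat \<times> nat \<Rightarrow> complex)) = 0"
  using vec_space.det_rank_iff[of "mat 2 2 f" 2] assms by simp

lemma det_rank1:
  assumes "det (mat 2 2 (f :: nat \<times> nat \<Rightarrow> complex)) = 0" "a < 2" "f (a,a) \<noteq> 0"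
  shows "vec_space.rank 2 (mat 2 2 f) = 1"
proof -
  have lt: "vec_space.rank 2 (mat 2 2 f) < 2" using vec_space.det_zero_low_rank[of "mat 2 2 f" 2, OF _ assms(1)] by simp
  have c: "{i. i < dim_row (mat 2 2 f) \<and> i \<in> {a}} = {a}" "{i. i < dim_col (mat 2 2 f) \<and> i \<in> {a}} = {a}" using assms(2) by auto
  have sub: "submatrix (mat 2 2 f) {a} {a} \<in> carrier_mat 1 1"
  proof -
    have "dim_row (submatrix (mat 2 2 f) {a} {a}) = 1" "dim_col (submatrix (mat 2 2 f) {a} {a}) = 1"
      unfolding dim_submatrix c by simp_all
    then show ?thesis by (intro carrier_matI)
  qed
  have p0: "pick {a} 0 = a" by (simp add: Least_equality)
  have "submatrix (mat 2 2 f) {a} {a} $$ (0,0) = mat 2 2 f $$ (pick {a} 0, pick {a} 0)"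
    by (rule submatrix_index) (simp_all only: c, simp_all)
  then have "submatrix (mat 2 2 f) {a} {a} $$ (0,0) = f (a,a)" unfolding p0 using assms(2) by simp
  then have "det (submatrix (mat 2 2 f) {a} {a}) \<noteq> 0" using det_single[OF sub] assms(3) by simp
  then have "card {j. j < 2 \<and> j \<in> {a}} \<le> vec_space.rank 2 (mat 2 2 f)"
    using vec_space.rank_gt_minor[of "mat 2 2 f" 2 2 "{a}" "{a}"] by simp
  moreover have "{j. j < 2 \<and> j \<in> {a}} = {a}" using assms(2) by auto
  ultimately show ?thesis using lt by simp
qed



definition comb :: "complex \<Rightarrow> op \<Rightarrow> complex \<Rightarrow> op \<Rightarrow> op" where
  "comb a A b B = (\<lambda>x y. a * A x y + b * B x y)"

lemma Bf_comb: "Bf T (comb a A b B) v v = a * Bf T A v v + b * Bf T B v v"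
  unfolding Bf_def comb_def by (simp add: sum.distrib sum_distrib_left algebra_simps)

lemma psd_comb:
  assumes "psd T A" "psd T B" "r \<ge> 0" "s \<ge> 0"
  shows "psd T (comb (of_real r) A (of_real s) B)"
  unfolding psd_def
proof (intro conjI allI impI)
  fix x y assume h: "x \<notin> cfgs T \<or> y \<notin> cfgs T"
  then show "comb (of_real r) A (of_real s) B x y = 0" unfolding comb_def using psd_zero[OF assms(1) h] psd_zero[OF assms(2) h] by simp
next
  fix v
  have "Im (Bf T A v v) = 0 \<and> Re (Bf T A v v) \<ge> 0" "Im (Bf T B v v) = 0 \<and> Re (Bf T B v v) \<ge> 0"
    using assms(1,2) unfolding psd_def by blast+
  then show "Im (Bf T (comb (of_real r) A (of_real s) B) v v) = 0" "Re (Bf T (comb (of_real r) A (of_real s) B) v v) \<ge> 0"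
    unfolding Bf_comb using assms(3,4) by simp_all
qed

lemma sm_comb: "sm T (comb a A b B) l c d = a * sm T A l c d + b * sm T B l c d"
  unfolding sm_def comb_def by (simp add: sum.distrib sum_distrib_left)

lemma tr_comb: "tr T (comb a A b B) = a * tr T A + b * tr T B"
  unfolding tr_def comb_def by (simp add: sum.distrib sum_distrib_left)

definition pert :: "(bool \<Rightarrow> bool \<Rightarrow> complex) \<Rightarrow> real \<Rightarrow> bool \<Rightarrow> bool \<Rightarrow> complex" where
  "pert m e = (\<lambda>a b. if a = b then (if a then m a b - of_real e else m a b + of_real e) else m a b)"

lemma pert_avg: "(1/2) * pert m e a b + (1/2) * pert m (- e) a b = m a b"
  unfolding pert_def by (cases a; cases b) (simp_all add: algebra_simps)

lemma pert_tr: "pert m e False False + pert m e True True = m False False + m True True"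
  unfolding pert_def by simp

lemma real_pert:
  fixes p q cc e :: real
  assumes "p \<ge> 0" "q \<ge> 0" "p + q = 1" "cc \<le> p * q" "cc \<ge> 0" "e = (p * q - cc) / 2"
  shows "cc \<le> (p + e) * (q - e)" "q - e \<ge> 0" "p + e \<ge> 0"
proof -
  have pq1: "p * q \<le> 1" using assms(1,2,3) by (metis add_increasing2 assms(3) le_add_same_cancel2 mult_left_le order.trans mult_le_one)
  have p1: "p \<le> 1" "q \<le> 1" using assms(1,2,3) by linarith+
  have e0: "e \<ge> 0" "e \<le> 1/2" using assms(4,5,6) pq1 by auto
  have "p * q \<le> q" using mult_left_le_one_le[of q p] p1 assms(1,2) by simp
  moreover have "2 * e = p * q - cc" using assms(6) by simp
  ultimately show "q - e \<ge> 0" using assms(2,5) by linarith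
  show "p + e \<ge> 0" using assms(1) e0 by linarith
  have "(p + e) * (q - e) - cc = e * (2 + q - p - e)" using assms(6) by (simp add: algebra_simps)
  moreover have "2 + q - p - e \<ge> 0" using p1 assms(2) e0 by linarith
  ultimately have "e * (2 + q - p - e) \<ge> 0" "(p + e) * (q - e) - cc = e * (2 + q - p - e)" using e0 by simp_all
  then show "cc \<le> (p + e) * (q - e)" by linarith
qed

lemma mixed_pert:
  assumes "crit m" "\<not> pure m" "m False False + m True True = 1"
  shows "\<exists>e>0. crit (pert m e) \<and> crit (pert m (- e))"
proof -
  obtain p q c where pq: "m False False = of_real p" "m True True = of_real q" "m False True = c" "m True False = cnj c"
    "p \<ge> 0" "q \<ge> 0" "(cmod c)^2 \<le> p * q"
    using assms(1) unfolding crit_def by (metis complex_eq_iff complex_of_real_def Re_complex_of_real Im_complex_of_real)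
  have s1: "p + q = 1" using assms(3) pq by (metis Re_complex_of_real one_complex.simps(1) plus_complex.simps(1))
  have cc: "c * cnj c = of_real ((cmod c)^2)" using complex_norm_square[of c] by simp
  have "(cmod c)^2 \<noteq> p * q"
  proof
    assume "(cmod c)^2 = p * q"
    then have "pure m" unfolding pure_def using pq cc by (simp add: mult.commute)
    then show False using assms(2) by simp
  qed
  then have lt: "(cmod c)^2 < p * q" using pq by simp
  define e where "e = (p * q - (cmod c)^2) / 2"
  have e: "e > 0" using lt by (simp add: e_def)
  have r1: "(cmod c)^2 \<le> (p + e) * (q - e)" "q - e \<ge> 0" "p + e \<ge> 0"
    using real_pert[OF pq(5,6) s1 pq(7) _ e_def] by auto
  have r2: "(cmod c)^2 \<le> (q + e) * (p - e)" "p - e \<ge> 0" "q + e \<ge> 0"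
    using real_pert[OF pq(6,5) _ _ _ e_def[unfolded mult.commute[of p q]]] s1 pq(7) by (auto simp: add.commute mult.commute)
  have "crit (pert m e)" unfolding crit_def pert_def using pq r1 by (simp add: mult.commute)
  moreover have "crit (pert m (- e))" unfolding crit_def pert_def using pq r2 by (simp add: mult.commute)
  ultimately show ?thesis using e by blast
qed




lemma P_props:
  assumes fin: "finite T" and ij: "i \<in> T" "j \<in> T" "i \<noteq> j" and ps: "psd T \<rho>" and tr1: "tr T \<rho> = 1"
    and ca: "crit \<alpha>" and cg: "crit \<gamma>" and ta: "\<alpha> False False + \<alpha> True True = 1" and tg: "\<gamma> False False + \<gamma> True True = 1"
  defines "R2 \<equiv> red (T - {j}) i (red T j \<rho>)"
  shows "psd T (tensor j (tensor i R2 \<alpha>) \<gamma>)" "tr T (tensor j (tensor i R2 \<alpha>) \<gamma>) = 1"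
    "\<And>l. l \<in> T \<Longrightarrow> sm T (tensor j (tensor i R2 \<alpha>) \<gamma>) l = (if l = j then \<gamma> else if l = i then \<alpha> else sm T \<rho> l)"
    "psd (T - {j} - {i}) R2" "tr (T - {j} - {i}) R2 = 1"
proof -
  define S0 where "S0 = T - {j} - {i}"
  have TS: "T = insert j (insert i S0)" using ij unfolding S0_def by auto
  have iS: "i \<notin> S0" and jS: "j \<notin> insert i S0" using ij unfolding S0_def by auto
  have i': "i \<in> T - {j}" using ij by auto
  have fS: "finite S0" using fin unfolding S0_def by auto
  have pR1: "psd (T - {j}) (red T j \<rho>)" by (rule red_psd[OF fin ij(2) ps])
  have pR2: "psd S0 R2" unfolding S0_def R2_def by (rule red_psd[OF _ i' pR1]) (use fin in auto)
  have tR2: "tr S0 R2 = 1" unfolding S0_def R2_def red_tr[OF i'] red_tr[OF ij(2)] by (rule tr1)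
  have smR2: "sm S0 R2 l = sm T \<rho> l" if "l \<in> S0" for l
  proof -
    have "l \<in> T - {j}" "l \<noteq> i" "l \<in> T" "l \<noteq> j" using that unfolding S0_def by auto
    then show ?thesis unfolding S0_def R2_def red_sm[OF i' \<open>l \<in> T - {j}\<close> \<open>l \<noteq> i\<close>] red_sm[OF ij(2) \<open>l \<in> T\<close> \<open>l \<noteq> j\<close>] by simp
  qed
  have smi: "sm (T - {j}) (red T j \<rho>) i = sm T \<rho> i" by (rule red_sm[OF ij(2) ij(1) ij(3)])
  have pA: "psd (insert i S0) (tensor i R2 \<alpha>)" by (rule tensor_psd[OF fS iS pR2 ca])
  show "psd T (tensor j (tensor i R2 \<alpha>) \<gamma>)" unfolding TS by (rule tensor_psd[OF _ jS pA cg]) (use fS in simp)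
  have tA: "tr (insert i S0) (tensor i R2 \<alpha>) = 1" unfolding tensor_tr[OF iS] tR2 ta by simp
  show "tr T (tensor j (tensor i R2 \<alpha>) \<gamma>) = 1" unfolding TS tensor_tr[OF jS] tA tg by simp
  show "psd (T - {j} - {i}) R2" using pR2 unfolding S0_def .
  show "tr (T - {j} - {i}) R2 = 1" using tR2 unfolding S0_def .
  fix l assume l: "l \<in> T"
  show "sm T (tensor j (tensor i R2 \<alpha>) \<gamma>) l = (if l = j then \<gamma> else if l = i then \<alpha> else sm T \<rho> l)"
  proof (cases "l = j")
    case True
    show ?thesis unfolding TS using True by (intro ext) (simp add: tensor_sm_k[OF jS] tA)
  next
    case False
    then have lS: "l \<in> insert i S0" using l TS by auto
    show ?thesis
    proof (cases "l = i")
      case True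
      show ?thesis unfolding TS using True \<open>l \<noteq> j\<close> by (intro ext) (simp add: tensor_sm_l[OF jS insertI1] tg tensor_sm_k[OF iS] tR2)
    next
      case False
      then have lS0: "l \<in> S0" using lS by auto
      have e: "sm (insert j (insert i S0)) (tensor j (tensor i R2 \<alpha>) \<gamma>) l a b = sm S0 R2 l a b" for a b
        by (simp add: tensor_sm_l[OF jS lS] tg tensor_sm_l[OF iS lS0] ta)
      show ?thesis using e[unfolded TS[symmetric]] False \<open>l \<noteq> j\<close> smR2[OF lS0] by (intro ext) simp
    qed
  qed
qed

lemma exists_diag: assumes "tr S A = 1" shows "\<exists>c\<in>cfgs S. A c c \<noteq> 0"
proof (rule ccontr)
  assume "\<not> ?thesis"
  then have "tr S A = 0" unfolding tr_def by (intro sum.neutral) auto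
  then show False using assms by simp
qed

lemma P_val:
  assumes "c i = False" "c j = False"
  shows "tensor j (tensor i R \<alpha>) \<gamma> c c = R c c * \<alpha> False False * \<gamma> False False"
proof -
  have "c(j := False) = c" "c(i := False) = c" using assms by (auto simp: fun_eq_iff)
  then show ?thesis unfolding tensor_def using assms by simp
qed

lemma nonunique:
  assumes fin: "finite T" and ij: "i \<in> T" "j \<in> T" "i \<noteq> j" and ps: "psd T \<rho>" and tr1: "tr T \<rho> = 1"
    and ni: "\<not> pure (sm T \<rho> i)" and nj: "\<not> pure (sm T \<rho> j)"
  shows "\<exists>\<sigma>. psd T \<sigma> \<and> tr T \<sigma> = 1 \<and> (\<forall>l\<in>T. sm T \<sigma> l = sm T \<rho> l) \<and> \<sigma> \<noteq> \<rho>"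
proof -
  define mi where "mi = sm T \<rho> i"
  define mj where "mj = sm T \<rho> j"
  have cmi: "crit mi" "crit mj" unfolding mi_def mj_def using psd2_crit psd2_sm fin ij ps by auto
  have tmi: "mi False False + mi True True = 1" "mj False False + mj True True = 1"
    unfolding mi_def mj_def using tr_split ij tr1 by metis+
  define R2 where "R2 = red (T - {j}) i (red T j \<rho>)"
  note PP = P_props[OF fin ij ps tr1, folded R2_def]
  define \<sigma>2 where "\<sigma>2 = tensor j (tensor i R2 mi) mj"
  have s2: "psd T \<sigma>2" "tr T \<sigma>2 = 1" "\<forall>l\<in>T. sm T \<sigma>2 l = sm T \<rho> l"
    unfolding \<sigma>2_def using PP(1-3)[OF cmi tmi] unfolding mi_def mj_def by auto
  show ?thesis
  proof (cases "\<sigma>2 = \<rho>")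
    case False
    then show ?thesis using s2 by blast
  next
    case True
    obtain e where e: "e > 0" "crit (pert mi e)" "crit (pert mi (- e))" using mixed_pert[OF cmi(1) ni[folded mi_def] tmi(1)] by blast
    obtain f where f: "f > 0" "crit (pert mj f)" "crit (pert mj (- f))" using mixed_pert[OF cmi(2) nj[folded mj_def] tmi(2)] by blast
    have tp: "pert mi e False False + pert mi e True True = 1" "pert mi (-e) False False + pert mi (-e) True True = 1"
      "pert mj f False False + pert mj f True True = 1" "pert mj (-f) False False + pert mj (-f) True True = 1"
      using tmi by (simp_all add: pert_tr)
    define Pp where "Pp = tensor j (tensor i R2 (pert mi e)) (pert mj f)"
    define Pm where "Pm = tensor j (tensor i R2 (pert mi (-e))) (pert mj (-f))"
    note P1 = PP(1-3)[OF e(2) f(2) tp(1) tp(3), folded Pp_def]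
    note P2 = PP(1-3)[OF e(3) f(3) tp(2) tp(4), folded Pm_def]
    define \<sigma>3 where "\<sigma>3 = comb (of_real (1/2)) Pp (of_real (1/2)) Pm"
    have ps3: "psd T \<sigma>3" unfolding \<sigma>3_def by (rule psd_comb[OF P1(1) P2(1)]) auto
    have tr3: "tr T \<sigma>3 = 1" unfolding \<sigma>3_def tr_comb P1(2) P2(2) by simp
    have sm3: "\<forall>l\<in>T. sm T \<sigma>3 l = sm T \<rho> l"
    proof
      fix l assume l: "l \<in> T"
      show "sm T \<sigma>3 l = sm T \<rho> l"
      proof (intro ext)
        fix a b
        have "sm T \<sigma>3 l a b = (1/2) * sm T Pp l a b + (1/2) * sm T Pm l a b"
          unfolding \<sigma>3_def sm_comb by simp
        also have "\<dots> = sm T \<rho> l a b"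
          unfolding P1(3)[OF l] P2(3)[OF l] using pert_avg[of mi e a b] pert_avg[of mj f a b] 
          unfolding mi_def mj_def by auto
        finally show "sm T \<sigma>3 l a b = sm T \<rho> l a b" .
      qed
    qed
    obtain c where c: "c \<in> cfgs (T - {j} - {i})" "R2 c c \<noteq> 0" using exists_diag[OF PP(5)[OF cmi tmi]] by blast
    have cij: "c i = False" "c j = False" using c(1) by (auto simp: cfgs_def)
    have "\<sigma>3 c c - \<rho> c c = R2 c c * (of_real e * of_real f)"
    proof -
      have "\<sigma>3 c c = (1/2) * (R2 c c * (mi False False + of_real e) * (mj False False + of_real f))
         + (1/2) * (R2 c c * (mi False False - of_real e) * (mj False False - of_real f))"
        unfolding \<sigma>3_def comb_def Pp_def Pm_def P_val[OF cij] by (simp add: pert_def)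
      moreover have "\<rho> c c = R2 c c * mi False False * mj False False"
      proof -
        have "\<rho> c c = \<sigma>2 c c" using True by simp
        then show ?thesis unfolding \<sigma>2_def P_val[OF cij] .
      qed
      ultimately show ?thesis by (simp add: algebra_simps)
    qed
    moreover have "R2 c c * (of_real e * of_real f) \<noteq> 0" using c(2) e(1) f(1) by simp
    ultimately have "\<sigma>3 \<noteq> \<rho>" by (metis diff_self)
    then show ?thesis using ps3 tr3 sm3 by blast
  qed
qed




lemma marg_single:
  "marginal n \<sigma> {i} x y = (if x \<in> cfgs {i} \<and> y \<in> cfgs {i} then sm (qubits n) \<sigma> i (x i) (y i) else 0)"
proof (cases "x \<in> cfgs {i} \<and> y \<in> cfgs {i}")
  case True
  have "(\<Sum>z\<in>cfgs (qubits n - {i}). \<sigma> (\<lambda>k. x k \<or> z k) (\<lambda>k. y k \<or> z k)) = sm (qubits n) \<sigma> i (x i) (y i)"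
    unfolding sm_def
  proof (intro sum.cong refl)
    fix z assume z: "z \<in> cfgs (qubits n - {i})"
    have "(\<lambda>k. x k \<or> z k) = z(i := x i)" "(\<lambda>k. y k \<or> z k) = z(i := y i)"
      using True z by (auto simp: cfgs_def fun_eq_iff)
    then show "\<sigma> (\<lambda>k. x k \<or> z k) (\<lambda>k. y k \<or> z k) = \<sigma> (z(i := x i)) (z(i := y i))" by simp
  qed
  then show ?thesis unfolding marginal_def using True by simp
next
  case False
  then show ?thesis unfolding marginal_def by auto
qed

lemma marg_empty:
  "marginal n \<sigma> {} x y = (if x \<in> cfgs {} \<and> y \<in> cfgs {} then tr (qubits n) \<sigma> else 0)"
proof (cases "x \<in> cfgs {} \<and> y \<in> cfgs {}")
  case True
  then have "x = (\<lambda>_. False)" "y = (\<lambda>_. False)" using cfgs_empty by auto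
  then show ?thesis unfolding marginal_def tr_def using True by simp
next
  case False
  then show ?thesis unfolding marginal_def by auto
qed

lemma marg_full:
  assumes "x \<in> cfgs (qubits n)" "y \<in> cfgs (qubits n)"
  shows "marginal n \<sigma> (qubits n) x y = \<sigma> x y"
  unfolding marginal_def using assms by (simp add: cfgs_empty)

lemma qubit_basis_cfgs: "qubit_basis i a \<in> cfgs {i}" "qubit_basis i a i = (a = 1)"
  unfolding qubit_basis_def cfgs_def by auto

lemma single_marginal_sm:
  "single_marginal n \<rho> i = mat 2 2 (\<lambda>(a, b). sm (qubits n) \<rho> i (a = 1) (b = 1))"
  unfolding single_marginal_def marg_single by (simp add: qubit_basis_cfgs)

lemma finite_qubits: "finite (qubits n)" unfolding qubits_def by simp

lemma rank_pure:
  assumes "density_matrix n \<rho>" "i \<in> qubits n"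
  shows "vec_space.rank 2 (single_marginal n \<rho> i) = 1 \<longleftrightarrow> pure (sm (qubits n) \<rho> i)"
proof -
  define f where "f = (\<lambda>(a::nat, b::nat). sm (qubits n) \<rho> i (a = 1) (b = 1))"
  have sm: "single_marginal n \<rho> i = mat 2 2 f" unfolding single_marginal_sm f_def ..
  have d: "det (mat 2 2 f) = 0 \<longleftrightarrow> pure (sm (qubits n) \<rho> i)"
    unfolding det2 pure_def f_def by (simp add: mult.commute)
  have tr: "sm (qubits n) \<rho> i False False + sm (qubits n) \<rho> i True True = 1"
    using tr_split[OF assms(2)] assms(1) unfolding density_iff by simp
  show ?thesis
  proof
    assume "vec_space.rank 2 (single_marginal n \<rho> i) = 1"
    then show "pure (sm (qubits n) \<rho> i)" using rank1_det d unfolding sm by blast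
  next
    assume p: "pure (sm (qubits n) \<rho> i)"
    show "vec_space.rank 2 (single_marginal n \<rho> i) = 1"
    proof (cases "f (0,0) = 0")
      case True
      then have "f (1,1) \<noteq> 0" using tr unfolding f_def by simp
      then show ?thesis unfolding sm using det_rank1[of f 1] d p by simp
    next
      case False
      then show ?thesis unfolding sm using det_rank1[of f 0] d p by simp
    qed
  qed
qed

lemma sm_from_marg:
  assumes "marginal n \<sigma> {i} = marginal n \<rho> {i}"
  shows "sm (qubits n) \<sigma> i = sm (qubits n) \<rho> i"
proof (intro ext)
  fix a b
  define x where "x = (\<lambda>k. k = i \<and> a)"
  define y where "y = (\<lambda>k. k = i \<and> b)"
  have xy: "x \<in> cfgs {i}" "y \<in> cfgs {i}" "x i = a" "y i = b" unfolding x_def y_def cfgs_def by auto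
  have "marginal n \<sigma> {i} x y = marginal n \<rho> {i} x y" using assms by simp
  then show "sm (qubits n) \<sigma> i a b = sm (qubits n) \<rho> i a b" unfolding marg_single using xy by simp
qed

definition delta :: "(nat \<Rightarrow> bool) \<Rightarrow> op" where
  "delta c = (\<lambda>x y. if x = c \<and> y = c then 1 else 0)"

lemma delta_density: assumes "c \<in> cfgs (qubits n)" shows "density_matrix n (delta c)"
  unfolding density_iff
proof
  have fin: "finite (cfgs (qubits n))" using finite_cfgs finite_qubits by blast
  have Bf: "Bf (qubits n) (delta c) v v = cnj (v c) * v c" for v
  proof -
    have "Bf (qubits n) (delta c) v v = (\<Sum>x\<in>cfgs (qubits n). if x = c then (\<Sum>y\<in>cfgs (qubits n). if y = c then cnj (v c) * v c else 0) else 0)"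
      unfolding Bf_def delta_def
    proof (intro sum.cong refl)
      fix x assume "x \<in> cfgs (qubits n)"
      show "(\<Sum>y\<in>cfgs (qubits n). cnj (v x) * (if x = c \<and> y = c then 1 else 0) * v y) =
        (if x = c then \<Sum>y\<in>cfgs (qubits n). if y = c then cnj (v c) * v c else 0 else 0)"
        by (cases "x = c") (auto intro!: sum.cong)
    qed
    then show ?thesis using fin assms by simp
  qed
  show "psd (qubits n) (delta c)" unfolding psd_def
  proof (intro conjI allI impI)
    fix x y assume "x \<notin> cfgs (qubits n) \<or> y \<notin> cfgs (qubits n)"
    then show "delta c x y = 0" using assms unfolding delta_def by auto
  next
    fix v
    have "cnj (v c) * v c = of_real ((cmod (v c))^2)" using complex_norm_square[of "v c"] by (simp add: mult.commute)
    then show "Im (Bf (qubits n) (delta c) v v) = 0" "Re (Bf (qubits n) (delta c) v v) \<ge> 0" unfolding Bf by simp_all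
  qed
  show "tr (qubits n) (delta c) = 1" unfolding tr_def delta_def using fin assms by simp
qed

lemma card_le1: assumes "finite S" "card S \<le> 1" shows "S = {} \<or> (\<exists>l. S = {l})"
proof (cases "card S = 0")
  case True then show ?thesis using assms(1) by simp
next
  case False then have "card S = Suc 0" using assms(2) by simp
  then show ?thesis by (auto simp: card_Suc_eq)
qed




theorem mainTheorem10:
  fixes n :: nat and \<rho> :: op
  assumes "n \<ge> 2" and "density_matrix n \<rho>"
  shows "L n \<rho> = 1 \<longleftrightarrow>
    (\<exists>j\<in>qubits n. \<forall>i\<in>qubits n - {j}. vec_space.rank 2 (single_marginal n \<rho> i) = 1)"
proof -
  define T where "T = qubits n"
  have fin: "finite T" unfolding T_def by (rule finite_qubits)
  have ps: "psd T \<rho>" and tr1: "tr T \<rho> = 1" using assms(2) unfolding density_iff T_def by auto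
  define PL where "PL = (\<lambda>k. \<exists>SS. determines n SS \<rho> \<and> (\<forall>S\<in>SS. card S \<le> k))"
  have Ldef: "L n \<rho> = (LEAST k. PL k)" unfolding L_def PL_def ..
  have rho_in: "\<rho> \<in> compatible n \<rho> SS" for SS unfolding compatible_def using assms(2) by simp
  have Pn: "PL n"
  proof -
    have "compatible n \<rho> {qubits n} = {\<rho>}"
    proof
      show "{\<rho>} \<subseteq> compatible n \<rho> {qubits n}" using rho_in by simp
      show "compatible n \<rho> {qubits n} \<subseteq> {\<rho>}"
      proof
        fix \<sigma> assume "\<sigma> \<in> compatible n \<rho> {qubits n}"
        then have ds: "density_matrix n \<sigma>" and m: "marginal n \<sigma> (qubits n) = marginal n \<rho> (qubits n)"
          unfolding compatible_def by auto
        have pss: "psd T \<sigma>" using ds unfolding density_iff T_def by auto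
        have "\<sigma> = \<rho>"
        proof (intro ext)
          fix x y
          show "\<sigma> x y = \<rho> x y"
          proof (cases "x \<in> cfgs T \<and> y \<in> cfgs T")
            case True
            then show ?thesis using m marg_full[of x n y] unfolding T_def by (metis)
          next
            case False
            then show ?thesis using psd_zero[OF pss] psd_zero[OF ps] by metis
          qed
        qed
        then show "\<sigma> \<in> {\<rho>}" by simp
      qed
    qed
    moreover have "card (qubits n) \<le> n" unfolding qubits_def by simp
    ultimately show ?thesis unfolding PL_def determines_def by (intro exI[of _ "{qubits n}"]) auto
  qed
  have LP: "PL (L n \<rho>)" unfolding Ldef by (rule LeastI[of PL n, OF Pn])
  have c0: "(\<lambda>_. False) \<in> cfgs (qubits n)" and c1: "(\<lambda>k. k = 1) \<in> cfgs (qubits n)"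
    using assms(1) unfolding cfgs_def qubits_def by auto
  have dne: "delta (\<lambda>_. False) \<noteq> delta (\<lambda>k. k = 1)"
  proof
    assume "delta (\<lambda>_. False) = delta (\<lambda>k. k = 1)"
    then have "delta (\<lambda>_. False) (\<lambda>_. False) (\<lambda>_. False) = delta (\<lambda>k. k = 1) (\<lambda>_. False) (\<lambda>_. False)" by simp
    moreover have "(\<lambda>_. False) \<noteq> (\<lambda>k::nat. k = 1)" by (metis)
    ultimately show False unfolding delta_def by simp
  qed
  have notP0: "\<not> PL 0"
  proof
    assume "PL 0"
    then obtain SS where d: "determines n SS \<rho>" and c: "\<forall>S\<in>SS. card S \<le> 0" unfolding PL_def by blast
    have SS: "\<forall>S\<in>SS. S = {}"
    proof
      fix S assume S: "S \<in> SS"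
      then have "S \<subseteq> qubits n" using d unfolding determines_def by auto
      then have "finite S" using finite_qubits finite_subset by blast
      moreover have "card S = 0" using c S by simp
      ultimately show "S = {}" by simp
    qed
    have inC: "delta c \<in> compatible n \<rho> SS" if "c \<in> cfgs (qubits n)" for c
    proof -
      have dc: "density_matrix n (delta c)" by (rule delta_density[OF that])
      have "marginal n (delta c) S = marginal n \<rho> S" if "S \<in> SS" for S
        using SS that dc assms(2) unfolding density_iff by (auto simp: marg_empty fun_eq_iff)
      then show ?thesis unfolding compatible_def using dc by auto
    qed
    have "compatible n \<rho> SS = {\<rho>}" using d unfolding determines_def by auto
    then show False using inC[OF c0] inC[OF c1] dne by auto
  qed
  have Lne0: "L n \<rho> \<noteq> 0" using LP notP0 by (metis)
  show ?thesis
  proof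
    assume L1: "L n \<rho> = 1"
    then obtain SS where d: "determines n SS \<rho>" and c: "\<forall>S\<in>SS. card S \<le> 1" using LP unfolding PL_def by auto
    show "\<exists>j\<in>qubits n. \<forall>i\<in>qubits n - {j}. vec_space.rank 2 (single_marginal n \<rho> i) = 1"
    proof (rule ccontr)
      assume nc: "\<not> ?thesis"
      have one: "1 \<in> qubits n" using assms(1) unfolding qubits_def by simp
      obtain i1 where i1: "i1 \<in> qubits n" "i1 \<noteq> 1" "vec_space.rank 2 (single_marginal n \<rho> i1) \<noteq> 1"
        using nc one by blast
      obtain i2 where i2: "i2 \<in> qubits n" "i2 \<noteq> i1" "vec_space.rank 2 (single_marginal n \<rho> i2) \<noteq> 1"
        using nc i1(1) by blast
      have np: "\<not> pure (sm T \<rho> i1)" "\<not> pure (sm T \<rho> i2)"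
        using i1 i2 rank_pure[OF assms(2)] unfolding T_def by auto
      obtain \<sigma> where \<sigma>: "psd T \<sigma>" "tr T \<sigma> = 1" "\<forall>l\<in>T. sm T \<sigma> l = sm T \<rho> l" "\<sigma> \<noteq> \<rho>"
        using nonunique[OF fin i1(1)[folded T_def] i2(1)[folded T_def] i2(2)[symmetric] ps tr1 np] by blast
      have ds: "density_matrix n \<sigma>" using \<sigma> unfolding density_iff T_def by auto
      have "marginal n \<sigma> S = marginal n \<rho> S" if S: "S \<in> SS" for S
      proof -
        have sub: "S \<subseteq> qubits n" using d S unfolding determines_def by auto
        then have "finite S" using finite_qubits finite_subset by blast
        then have "S = {} \<or> (\<exists>l. S = {l})" using card_le1 c S by blast
        then show ?thesis
        proof
          assume "S = {}"
          then show ?thesis using \<sigma>(2) tr1 unfolding T_def by (auto simp: marg_empty fun_eq_iff)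
        next
          assume "\<exists>l. S = {l}"
          then obtain l where l: "S = {l}" by blast
          then have "l \<in> T" using sub unfolding T_def by auto
          then show ?thesis using \<sigma>(3) unfolding l T_def by (auto simp: marg_single fun_eq_iff)
        qed
      qed
      then have "\<sigma> \<in> compatible n \<rho> SS" unfolding compatible_def using ds by auto
      moreover have "compatible n \<rho> SS = {\<rho>}" using d unfolding determines_def by auto
      ultimately show False using \<sigma>(4) by auto
    qed
  next
    assume "\<exists>j\<in>qubits n. \<forall>i\<in>qubits n - {j}. vec_space.rank 2 (single_marginal n \<rho> i) = 1"
    then obtain j where j: "j \<in> qubits n" and pj: "\<forall>i\<in>qubits n - {j}. vec_space.rank 2 (single_marginal n \<rho> i) = 1" by blast
    have pure: "\<forall>i\<in>T - {j}. pure (sm T \<rho> i)" using pj rank_pure[OF assms(2)] unfolding T_def by auto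
    define SS where "SS = (\<lambda>i. {i}) ` qubits n"
    have "compatible n \<rho> SS = {\<rho>}"
    proof
      show "{\<rho>} \<subseteq> compatible n \<rho> SS" using rho_in by simp
      show "compatible n \<rho> SS \<subseteq> {\<rho>}"
      proof
        fix \<sigma> assume "\<sigma> \<in> compatible n \<rho> SS"
        then have ds: "density_matrix n \<sigma>" and m: "\<forall>i\<in>qubits n. marginal n \<sigma> {i} = marginal n \<rho> {i}"
          unfolding compatible_def SS_def by auto
        have pss: "psd T \<sigma>" "tr T \<sigma> = 1" using ds unfolding density_iff T_def by auto
        have "\<forall>i\<in>T. sm T \<sigma> i = sm T \<rho> i" using m sm_from_marg unfolding T_def by blast
        then have "\<sigma> = \<rho>" using uniq[OF fin pss(1) ps pss(2) tr1 _ pure] by blast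
        then show "\<sigma> \<in> {\<rho>}" by simp
      qed
    qed
    then have "determines n SS \<rho>" unfolding determines_def SS_def by auto
    moreover have "\<forall>S\<in>SS. card S \<le> 1" unfolding SS_def by auto
    ultimately have "PL 1" unfolding PL_def by blast
    then have "L n \<rho> \<le> 1" unfolding Ldef by (rule Least_le)
    then show "L n \<rho> = 1" using Lne0 by simp
  qed
qed


end
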